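(* Let $s_0\le s_1\le\cdots\le s_t$ be positive numbers and define $a_k=\sum_{i=0}^k\frac{s_i}{s_k}$ for $k\le t$. Then \[ s_ta_t^2\le 2\sum_{k=0}^ts_ka_k. \] *)

theory Defs
  imports Main "HOL.Real"
begin

definition aseq :: "(nat \<Rightarrow> real) \<Rightarrow> nat \<Rightarrow> real" where
  "aseq s k = (\<Sum>i=0..k. s i / s k)"

end

theory Submission
  imports Defs
begin

lemma aseq_eq: "aseq s k = (\<Sum>i=0..k. s i) / s k"
  unfolding aseq_def by (simp add: sum_divide_distrib)

lemma key:
  fixes s :: "nat \<Rightarrow> real"
  assumes pos: "\<And>i. i \<le> t \<Longrightarrow> s i > 0"
    and mono: "\<And>i j. i \<le> j \<Longrightarrow> j \<le> t \<Longrightarrow> s i \<le> s j"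
  shows "n \<le> t \<Longrightarrow> (\<Sum>i=0..n. s i)^2 / s n \<le> 2 * (\<Sum>k=0..n. (\<Sum>i=0..k. s i))"
proof (induction n)
  case 0
  then show ?case using pos[of 0] by (simp add: power2_eq_square)
next
  case (Suc n)
  define A where "A = (\<Sum>i=0..n. s i)"
  have A0: "A \<ge> 0" unfolding A_def using Suc.prems pos by (intro sum_nonneg) (auto intro: less_imp_le)
  have p1: "s n > 0" "s (Suc n) > 0" using Suc.prems pos by auto
  have m: "s n \<le> s (Suc n)" using Suc.prems mono by auto
  have IH: "A^2 / s n \<le> 2 * (\<Sum>k=0..n. (\<Sum>i=0..k. s i))" using Suc A_def by auto
  have d: "A^2 / s (Suc n) \<le> A^2 / s n"
    using p1 m by (intro divide_left_mono) auto
  have "(\<Sum>i=0..Suc n. s i)^2 / s (Suc n) = A^2 / s (Suc n) + 2*A + s (Suc n)"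
    using p1 by (simp add: A_def power2_eq_square field_simps)
  also have "\<dots> \<le> 2 * (\<Sum>k=0..n. (\<Sum>i=0..k. s i)) + 2 * (A + s (Suc n))"
    using d IH p1 by (simp add: algebra_simps)
  also have "\<dots> = 2 * (\<Sum>k=0..Suc n. (\<Sum>i=0..k. s i))"
    by (simp add: A_def)
  finally show ?case .
qed

theorem lemma25:
  fixes s :: "nat \<Rightarrow> real" and t :: nat
  assumes pos: "\<And>i. i \<le> t \<Longrightarrow> s i > 0"
    and mono: "\<And>i j. i \<le> j \<Longrightarrow> j \<le> t \<Longrightarrow> s i \<le> s j"
  shows "s t * (aseq s t)\<^sup>2 \<le> 2 * (\<Sum>k=0..t. s k * aseq s k)"
proof -
  have "s t * (aseq s t)\<^sup>2 = (\<Sum>i=0..t. s i)^2 / s t"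
    using pos[of t] by (simp add: aseq_eq power2_eq_square)
  moreover have "(\<Sum>k=0..t. s k * aseq s k) = (\<Sum>k=0..t. (\<Sum>i=0..k. s i))"
    proof (intro sum.cong refl)
    fix k assume "k \<in> {0..t}"
    then have "s k > 0" using pos by auto
    then show "s k * aseq s k = (\<Sum>i=0..k. s i)" by (simp add: aseq_eq)
  qed
  ultimately show ?thesis using key[where s=s and t=t and n=t, OF pos mono] by simp
qed

end
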